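(* Let $X$ be a subset of $\mathbb{R}^2$, equipped with the metric induced by the $\ell_1$ metric $d(x,y)=|x_1-y_1|+|x_2-y_2|$. Then for every $r>0$, the Vietoris--Rips complex $\mathrm{VR}(X;r)$ is homotopy equivalent to the open $r/2$-neighborhood $N_{r/2}(X)=\{y\in\mathbb{R}^2 : \exists x\in X,\ \|x-y\|_1<r/2\}$ of $X$ in $(\mathbb{R}^2,\ell_1)$. In particular, if $X$ is $\epsilon$-dense in $(\mathbb{R}^2,\ell_1)$ for some $\epsilon>0$, then $\mathrm{VR}(X;r)$ is contractible for every $r>2\epsilon$.
   Context: For a metric space $(X,d_X)$ and $r>0$, the Vietoris--Rips complex $\mathrm{VR}(X;r)$ is the simplicial complex whose vertex set is $X$ and whose simplices are the nonempty finite subsets of $X$ of diameter strictly less than $r$. A subset $K$ of a metric space $Y$ is $\epsilon$-dense if for every $y\in Y$ there exists $k\in K$ with $d_Y(y,k)<\epsilon$. *)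

theory Defs
  imports "HOL-Analysis.Analysis"
begin

text \<open>Abstract simplicial complexes are given as a set K of nonempty finite vertex sets
(closed under nonempty subsets). A point of the geometric realization is a function
\<open>\<alpha> :: 'a \<Rightarrow> real\<close> (barycentric coordinates) with nonnegative values, finite support
belonging to K, and coordinates summing to 1.\<close>

definition supp_coords :: "('a \<Rightarrow> real) \<Rightarrow> 'a set" where
  "supp_coords f = {v. f v \<noteq> 0}"

definition geom_real :: "'a set set \<Rightarrow> ('a \<Rightarrow> real) set" where
  "geom_real K = {f. (\<forall>v. 0 \<le> f v) \<and> finite (supp_coords f) \<and> supp_coords f \<in> K
                     \<and> sum f (supp_coords f) = 1}"

definition closed_simplex :: "'a set set \<Rightarrow> 'a set \<Rightarrow> ('a \<Rightarrow> real) set" where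
  "closed_simplex K \<sigma> = {f \<in> geom_real K. supp_coords f \<subseteq> \<sigma>}"

text \<open>Weak (coherent) topology: a set is open iff its intersection with every closed
simplex is open in that simplex, where each closed simplex carries its Euclidean topology
(the product topology on functions restricted to the finitely many coordinates of \<open>\<sigma>\<close>).\<close>
definition weak_open :: "'a set set \<Rightarrow> ('a \<Rightarrow> real) set \<Rightarrow> bool" where
  "weak_open K U \<longleftrightarrow> U \<subseteq> geom_real K \<and>
     (\<forall>\<sigma>\<in>K. openin (top_of_set (closed_simplex K \<sigma>)) (U \<inter> closed_simplex K \<sigma>))"

lemma istopology_weak_open: "istopology (weak_open K)"
  unfolding istopology_def weak_open_def
proof (intro conjI allI impI)
  fix S T :: "('a \<Rightarrow> real) set"
  assume S: "S \<subseteq> geom_real K \<and> (\<forall>\<sigma>\<in>K. openin (top_of_set (closed_simplex K \<sigma>)) (S \<inter> closed_simplex K \<sigma>))"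
     and T: "T \<subseteq> geom_real K \<and> (\<forall>\<sigma>\<in>K. openin (top_of_set (closed_simplex K \<sigma>)) (T \<inter> closed_simplex K \<sigma>))"
  show "S \<inter> T \<subseteq> geom_real K" using S by blast
  show "\<forall>\<sigma>\<in>K. openin (top_of_set (closed_simplex K \<sigma>)) (S \<inter> T \<inter> closed_simplex K \<sigma>)"
  proof
    fix \<sigma> assume "\<sigma> \<in> K"
    then have "openin (top_of_set (closed_simplex K \<sigma>)) ((S \<inter> closed_simplex K \<sigma>) \<inter> (T \<inter> closed_simplex K \<sigma>))"
      using S T by (metis openin_Int)
    moreover have "(S \<inter> closed_simplex K \<sigma>) \<inter> (T \<inter> closed_simplex K \<sigma>) = S \<inter> T \<inter> closed_simplex K \<sigma>" by blast
    ultimately show "openin (top_of_set (closed_simplex K \<sigma>)) (S \<inter> T \<inter> closed_simplex K \<sigma>)" by simp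
  qed
next
  fix \<K> :: "('a \<Rightarrow> real) set set"
  assume H: "\<forall>S\<in>\<K>. S \<subseteq> geom_real K \<and> (\<forall>\<sigma>\<in>K. openin (top_of_set (closed_simplex K \<sigma>)) (S \<inter> closed_simplex K \<sigma>))"
  show "\<Union>\<K> \<subseteq> geom_real K" using H by blast
  show "\<forall>\<sigma>\<in>K. openin (top_of_set (closed_simplex K \<sigma>)) (\<Union>\<K> \<inter> closed_simplex K \<sigma>)"
  proof
    fix \<sigma> assume "\<sigma> \<in> K"
    then have "openin (top_of_set (closed_simplex K \<sigma>)) (\<Union>S\<in>\<K>. S \<inter> closed_simplex K \<sigma>)"
      using H by (intro openin_Union) blast
    moreover have "(\<Union>S\<in>\<K>. S \<inter> closed_simplex K \<sigma>) = \<Union>\<K> \<inter> closed_simplex K \<sigma>" by blast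
    ultimately show "openin (top_of_set (closed_simplex K \<sigma>)) (\<Union>\<K> \<inter> closed_simplex K \<sigma>)" by simp
  qed
qed

definition realization :: "'a set set \<Rightarrow> ('a \<Rightarrow> real) topology" where
  "realization K = topology (weak_open K)"

definition l1_dist :: "real \<times> real \<Rightarrow> real \<times> real \<Rightarrow> real" where
  "l1_dist x y = \<bar>fst x - fst y\<bar> + \<bar>snd x - snd y\<bar>"

definition VR :: "(real \<times> real) set \<Rightarrow> real \<Rightarrow> (real \<times> real) set set" where
  "VR X r = {\<sigma>. \<sigma> \<noteq> {} \<and> finite \<sigma> \<and> \<sigma> \<subseteq> X \<and> (\<forall>x\<in>\<sigma>. \<forall>y\<in>\<sigma>. l1_dist x y < r)}"

definition l1_nbhd :: "(real \<times> real) set \<Rightarrow> real \<Rightarrow> (real \<times> real) set" where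
  "l1_nbhd X s = {y. \<exists>x\<in>X. l1_dist x y < s}"

definition l1_dense :: "(real \<times> real) set \<Rightarrow> real \<Rightarrow> bool" where
  "l1_dense X \<epsilon> \<longleftrightarrow> (\<forall>y. \<exists>x\<in>X. l1_dist y x < \<epsilon>)"

end

theory Submission
  imports Defs
begin


lemma l1_dist_sym: "l1_dist x y = l1_dist y x"
  unfolding l1_dist_def by linarith

lemma l1_dist_triangle: "l1_dist x z \<le> l1_dist x y + l1_dist y z"
  unfolding l1_dist_def by linarith

lemma l1_dist_nonneg: "0 \<le> l1_dist x y"
  unfolding l1_dist_def by linarith

lemma l1_dist_self [simp]: "l1_dist x x = 0"
  unfolding l1_dist_def by simp

definition UU :: "real \<times> real \<Rightarrow> real" where "UU a = fst a + snd a"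
definition VV :: "real \<times> real \<Rightarrow> real" where "VV a = fst a - snd a"

lemma l1_dist_UV: "l1_dist x y = max \<bar>UU x - UU y\<bar> \<bar>VV x - VV y\<bar>"
  unfolding l1_dist_def UU_def VV_def by (simp add: max_def abs_if) linarith?


lemma lin_comb_zero:
  fixes S :: "(real\<times>real) set" and w :: "real\<times>real \<Rightarrow> real"
  assumes fin: "finite S" and tot: "w0 + sum w S = 1"
    and p: "p = w0 *\<^sub>R y + (\<Sum>x\<in>S. w x *\<^sub>R x)"
  shows "w0 * (c1 * (UU y - UU p) + c2 * (VV y - VV p))
         + (\<Sum>x\<in>S. w x * (c1 * (UU x - UU p) + c2 * (VV x - VV p))) = 0"
proof -
  have f: "fst p = w0 * fst y + (\<Sum>x\<in>S. w x * fst x)"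
    using p by (simp add: fst_sum)
  have s: "snd p = w0 * snd y + (\<Sum>x\<in>S. w x * snd x)"
    using p by (simp add: snd_sum)
  have U: "UU p = w0 * UU y + (\<Sum>x\<in>S. w x * UU x)"
    unfolding UU_def f s by (simp add: sum.distrib distrib_left)
  have V: "VV p = w0 * VV y + (\<Sum>x\<in>S. w x * VV x)"
    unfolding VV_def f s by (simp add: sum_subtractf right_diff_distrib)
  define k where "k = c1 * UU p + c2 * VV p"
  have e: "\<And>x. w x * (c1 * (UU x - UU p) + c2 * (VV x - VV p)) = c1 * (w x * UU x) + c2 * (w x * VV x) - k * w x"
    unfolding k_def by (simp add: algebra_simps)
  have "(\<Sum>x\<in>S. w x * (c1 * (UU x - UU p) + c2 * (VV x - VV p)))
      = (\<Sum>x\<in>S. c1 * (w x * UU x) + c2 * (w x * VV x) - k * w x)"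
    by (simp only: e)
  also have "\<dots> = c1 * (\<Sum>x\<in>S. w x * UU x) + c2 * (\<Sum>x\<in>S. w x * VV x) - k * sum w S"
    by (simp add: sum_subtractf sum.distrib sum_distrib_left)
  finally have "(\<Sum>x\<in>S. w x * (c1 * (UU x - UU p) + c2 * (VV x - VV p)))
      = c1 * (UU p - w0 * UU y) + c2 * (VV p - w0 * VV y) - k * (1 - w0)"
    using U V tot by simp
  then show ?thesis unfolding k_def by (simp add: algebra_simps)
qed

lemma lin_comb_contra:
  fixes S :: "(real\<times>real) set" and w :: "real\<times>real \<Rightarrow> real"
  assumes fin: "finite S" and wnn: "\<forall>x\<in>S. 0 \<le> w x" and w0: "0 \<le> w0"
    and tot: "w0 + sum w S = 1" and pos: "sum w S > 0"
    and p: "p = w0 *\<^sub>R y + (\<Sum>x\<in>S. w x *\<^sub>R x)"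
    and Sx: "\<forall>x\<in>S. c1 * (UU x - UU p) + c2 * (VV x - VV p) > 0"
    and Sy: "w0 = 0 \<or> c1 * (UU y - UU p) + c2 * (VV y - VV p) \<ge> 0"
  shows False
proof -
  have "\<exists>x0\<in>S. w x0 \<noteq> 0"
  proof (rule ccontr)
    assume "\<not> ?thesis" then have "sum w S = 0" by simp
    then show False using pos by simp
  qed
  then obtain x0 where x0: "x0 \<in> S" "w x0 > 0"
    using wnn by (metis less_eq_real_def)
  have "0 < (\<Sum>x\<in>S. w x * (c1 * (UU x - UU p) + c2 * (VV x - VV p)))"
  proof (rule sum_pos2[OF fin x0(1)])
    show "0 < w x0 * (c1 * (UU x0 - UU p) + c2 * (VV x0 - VV p))"
      using x0 Sx by simp
    fix i assume "i \<in> S"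
    then show "0 \<le> w i * (c1 * (UU i - UU p) + c2 * (VV i - VV p))"
      using Sx wnn by (simp add: less_imp_le)
  qed
  moreover have "0 \<le> w0 * (c1 * (UU y - UU p) + c2 * (VV y - VV p))"
    using Sy w0 by auto
  ultimately show False
    using lin_comb_zero[OF fin tot p, of c1 c2] by linarith
qed


lemma hull_core:
  fixes S :: "(real\<times>real) set" and w :: "real\<times>real \<Rightarrow> real"
  assumes fin: "finite S" and ne: "S \<noteq> {}" and wnn: "\<forall>x\<in>S. 0 \<le> w x" and w0: "0 \<le> w0"
    and tot: "w0 + sum w S = 1"
    and p: "p = w0 *\<^sub>R y + (\<Sum>x\<in>S. w x *\<^sub>R x)"
    and diam: "\<forall>x\<in>S. \<forall>x'\<in>S. l1_dist x x' < 2 * s"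
    and yclose: "w0 = 0 \<or> (\<forall>x\<in>S. l1_dist y x < s)"
  shows "\<exists>x\<in>S. l1_dist p x < s"
proof (rule ccontr)
  assume nt: "\<not> ?thesis"
  have far: "\<forall>x\<in>S. \<bar>UU x - UU p\<bar> \<ge> s \<or> \<bar>VV x - VV p\<bar> \<ge> s"
  proof
    fix x assume "x \<in> S"
    then have "l1_dist p x \<ge> s" using nt by (meson not_less)
    then show "\<bar>UU x - UU p\<bar> \<ge> s \<or> \<bar>VV x - VV p\<bar> \<ge> s"
      by (simp add: l1_dist_UV abs_minus_commute le_max_iff_disj)
  qed
  have dU: "\<forall>x\<in>S. \<forall>x'\<in>S. \<bar>UU x - UU x'\<bar> < 2 * s" and dV: "\<forall>x\<in>S. \<forall>x'\<in>S. \<bar>VV x - VV x'\<bar> < 2 * s"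
    using diam by (auto simp: l1_dist_UV)
  have yU: "w0 = 0 \<or> (\<forall>x\<in>S. \<bar>UU y - UU x\<bar> < s \<and> \<bar>VV y - VV x\<bar> < s)"
    using yclose by (auto simp: l1_dist_UV)
  have spos: "s > 0" using diam ne by fastforce
  show False
  proof (cases "sum w S = 0")
    case True
    then have "\<forall>x\<in>S. w x = 0" using sum_nonneg_eq_0_iff[OF fin] wnn by blast
    then have "p = y" using p True tot by simp
    moreover have "w0 \<noteq> 0" using True tot by simp
    ultimately show False using yclose ne nt by (auto simp: l1_dist_sym)
  next
    case False
    then have pos: "sum w S > 0" using wnn by (simp add: less_le sum_nonneg)
    define cu :: real where "cu = (if \<exists>x\<in>S. UU x - UU p \<ge> s then 1 else -1)"
    define cv :: real where "cv = (if \<exists>x\<in>S. VV x - VV p \<ge> s then 1 else -1)"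
    have cuU: "\<forall>x\<in>S. \<bar>UU x - UU p\<bar> \<ge> s \<longrightarrow> cu * (UU x - UU p) \<ge> s"
    proof (cases "\<exists>x\<in>S. UU x - UU p \<ge> s")
      case True
      then obtain x0 where x0: "x0 \<in> S" "UU x0 - UU p \<ge> s" by blast
      have cu: "cu = 1" using True unfolding cu_def by simp
      show ?thesis
      proof (intro ballI impI)
        fix x assume x: "x \<in> S" "\<bar>UU x - UU p\<bar> \<ge> s"
        have "\<bar>UU x0 - UU x\<bar> < 2 * s" using dU x0(1) x(1) by blast
        then show "cu * (UU x - UU p) \<ge> s" using x(2) x0(2) cu
          by (simp add: abs_less_iff abs_le_iff) linarith
      qed
    next
      case False
      have cu: "cu = -1" using False unfolding cu_def by simp
      show ?thesis using False cu by (auto simp: abs_le_iff)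
    qed
    have cvV: "\<forall>x\<in>S. \<bar>VV x - VV p\<bar> \<ge> s \<longrightarrow> cv * (VV x - VV p) \<ge> s"
    proof (cases "\<exists>x\<in>S. VV x - VV p \<ge> s")
      case True
      then obtain x0 where x0: "x0 \<in> S" "VV x0 - VV p \<ge> s" by blast
      have cv: "cv = 1" using True unfolding cv_def by simp
      show ?thesis
      proof (intro ballI impI)
        fix x assume x: "x \<in> S" "\<bar>VV x - VV p\<bar> \<ge> s"
        have "\<bar>VV x0 - VV x\<bar> < 2 * s" using dV x0(1) x(1) by blast
        then show "cv * (VV x - VV p) \<ge> s" using x(2) x0(2) cv
          by (simp add: abs_less_iff abs_le_iff) linarith
      qed
    next
      case False
      have cv: "cv = -1" using False unfolding cv_def by simp
      show ?thesis using False cv by (auto simp: abs_le_iff)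
    qed
    have cu1: "cu = 1 \<or> cu = -1" and cv1: "cv = 1 \<or> cv = -1" unfolding cu_def cv_def by auto
    define A where "A = {x\<in>S. cu * (UU x - UU p) \<ge> s}"
    define B where "B = {x\<in>S. cv * (VV x - VV p) \<ge> s}"
    have AB: "\<forall>x\<in>S. x \<in> A \<or> x \<in> B" using far cuU cvV unfolding A_def B_def by blast
    have yA: "cu * (UU y - UU p) > 0" if "a \<in> A" "w0 \<noteq> 0" for a
    proof -
      have a: "a \<in> S" "cu * (UU a - UU p) \<ge> s" using that(1) unfolding A_def by auto
      have "\<bar>UU y - UU a\<bar> < s" using yU that(2) a(1) by blast
      then show ?thesis using a(2) cu1 by (auto simp: abs_less_iff)
    qed
    have yB: "cv * (VV y - VV p) > 0" if "b \<in> B" "w0 \<noteq> 0" for b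
    proof -
      have b: "b \<in> S" "cv * (VV b - VV p) \<ge> s" using that(1) unfolding B_def by auto
      have "\<bar>VV y - VV b\<bar> < s" using yU that(2) b(1) by blast
      then show ?thesis using b(2) cv1 by (auto simp: abs_less_iff)
    qed
    have xA: "cv * (VV x - VV p) > - s" if "x \<in> S" "b \<in> B" for x b
    proof -
      have b: "b \<in> S" "cv * (VV b - VV p) \<ge> s" using that(2) unfolding B_def by auto
      have "\<bar>VV x - VV b\<bar> < 2 * s" using dV that(1) b(1) by blast
      then show ?thesis using b(2) cv1 by (auto simp: abs_less_iff)
    qed
    have xB: "cu * (UU x - UU p) > - s" if "x \<in> S" "a \<in> A" for x a
    proof -
      have a: "a \<in> S" "cu * (UU a - UU p) \<ge> s" using that(2) unfolding A_def by auto
      have "\<bar>UU x - UU a\<bar> < 2 * s" using dU that(1) a(1) by blast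
      then show ?thesis using a(2) cu1 by (auto simp: abs_less_iff)
    qed
    show False
    proof (cases "A = {}")
      case Aempty: True
      then have SB: "\<forall>x\<in>S. x \<in> B" using AB by blast
      obtain b where b: "b \<in> B" using SB ne by blast
      show False
      proof (rule lin_comb_contra[OF fin wnn w0 tot pos p, of 0 cv])
        show "\<forall>x\<in>S. 0 * (UU x - UU p) + cv * (VV x - VV p) > 0"
          using SB spos unfolding B_def by force
        show "w0 = 0 \<or> 0 * (UU y - UU p) + cv * (VV y - VV p) \<ge> 0"
          using yB[OF b] by force
      qed
    next
      case Ane: False
      then obtain a where a: "a \<in> A" by blast
      show False
      proof (cases "B = {}")
        case True
        then have SA: "\<forall>x\<in>S. x \<in> A" using AB by blast
        show False
        proof (rule lin_comb_contra[OF fin wnn w0 tot pos p, of cu 0])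
          show "\<forall>x\<in>S. cu * (UU x - UU p) + 0 * (VV x - VV p) > 0"
            using SA spos unfolding A_def by force
          show "w0 = 0 \<or> cu * (UU y - UU p) + 0 * (VV y - VV p) \<ge> 0"
            using yA[OF a] by force
        qed
      next
        case False
        then obtain b where b: "b \<in> B" by blast
        show False
        proof (rule lin_comb_contra[OF fin wnn w0 tot pos p, of cu cv])
          show "\<forall>x\<in>S. cu * (UU x - UU p) + cv * (VV x - VV p) > 0"
          proof
            fix x assume x: "x \<in> S"
            show "cu * (UU x - UU p) + cv * (VV x - VV p) > 0"
            proof (cases "x \<in> A")
              case True
              then have "cu * (UU x - UU p) \<ge> s" unfolding A_def by auto
              then show ?thesis using xA[OF x b] by linarith
            next
              case False
              then have "x \<in> B" using AB x by blast
              then have "cv * (VV x - VV p) \<ge> s" unfolding B_def by auto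
              then show ?thesis using xB[OF x a] by linarith
            qed
          qed
          show "w0 = 0 \<or> cu * (UU y - UU p) + cv * (VV y - VV p) \<ge> 0"
            using yA[OF a] yB[OF b] by force
        qed
      qed
    qed
  qed
qed


lemma openin_realization: "openin (realization K) = weak_open K"
  unfolding realization_def by (simp add: istopology_weak_open)

lemma weak_open_geom_real: "weak_open K (geom_real K)"
  unfolding weak_open_def
proof (intro conjI ballI)
  fix \<sigma> assume "\<sigma> \<in> K"
  have "geom_real K \<inter> closed_simplex K \<sigma> = closed_simplex K \<sigma>"
    unfolding closed_simplex_def by blast
  then show "openin (top_of_set (closed_simplex K \<sigma>)) (geom_real K \<inter> closed_simplex K \<sigma>)"
    by simp
qed simp

lemma topspace_realization: "topspace (realization K) = geom_real K"
proof
  show "topspace (realization K) \<subseteq> geom_real K"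
    unfolding topspace_def openin_realization weak_open_def by blast
  show "geom_real K \<subseteq> topspace (realization K)"
    using weak_open_geom_real openin_subset by (metis openin_realization)
qed

lemma geom_real_in_simplex: "\<alpha> \<in> geom_real K \<Longrightarrow> \<alpha> \<in> closed_simplex K (supp_coords \<alpha>)"
  unfolding closed_simplex_def by simp

lemma geom_real_supp_in: "\<alpha> \<in> geom_real K \<Longrightarrow> supp_coords \<alpha> \<in> K"
  unfolding geom_real_def by simp

lemma closed_supp_subset: "closed {\<alpha> :: 'a \<Rightarrow> real. supp_coords \<alpha> \<subseteq> \<rho>}"
proof -
  have "{\<alpha> :: 'a \<Rightarrow> real. supp_coords \<alpha> \<subseteq> \<rho>} = (\<Inter>v\<in>-\<rho>. {\<alpha>. \<alpha> v = 0})"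
    unfolding supp_coords_def by auto
  moreover have "closed {\<alpha> :: 'a \<Rightarrow> real. \<alpha> v = 0}" for v
    by (rule closed_Collect_eq) (auto intro: continuous_on_product_coordinates)
  ultimately show ?thesis by (metis closed_INT)
qed


lemma cont_into_realization:
  assumes cont: "continuous_map Y euclidean h"
    and mem: "\<And>y. y \<in> topspace Y \<Longrightarrow> h y \<in> geom_real K"
    and loc: "\<And>y. y \<in> topspace Y \<Longrightarrow> \<exists>T F. openin Y T \<and> y \<in> T \<and> finite F \<and> (\<forall>y'\<in>T. supp_coords (h y') \<subseteq> F)"
  shows "continuous_map Y (realization K) h"
  unfolding continuous_map
proof (intro conjI allI impI)
  show "h ` topspace Y \<subseteq> topspace (realization K)"
    using mem by (auto simp: topspace_realization)
  fix U assume "openin (realization K) U"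
  then have U: "weak_open K U" by (simp add: openin_realization)
  show "openin Y {y \<in> topspace Y. h y \<in> U}"
  proof (subst openin_subopen, intro ballI)
    fix y0 assume y0: "y0 \<in> {y \<in> topspace Y. h y \<in> U}"
    obtain T F where T: "openin Y T" "y0 \<in> T" "finite F" "\<forall>y'\<in>T. supp_coords (h y') \<subseteq> F"
    proof -
      have "y0 \<in> topspace Y" using y0 by simp
      from loc[OF this] show ?thesis using that by blast
    qed
    define L where "L = {\<alpha> \<in> geom_real K. supp_coords \<alpha> \<subseteq> F}"
    define R where "R = K \<inter> Pow F"
    have finR: "finite R" unfolding R_def using T(3) by simp
    have L_eq: "L - U = (\<Union>\<rho>\<in>R. closed_simplex K \<rho> - U)"
    proof
      show "L - U \<subseteq> (\<Union>\<rho>\<in>R. closed_simplex K \<rho> - U)"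
      proof
        fix \<alpha> assume "\<alpha> \<in> L - U"
        then have a: "\<alpha> \<in> geom_real K" "supp_coords \<alpha> \<subseteq> F" "\<alpha> \<notin> U" unfolding L_def by auto
        then have "supp_coords \<alpha> \<in> R" unfolding R_def using geom_real_supp_in by blast
        moreover have "\<alpha> \<in> closed_simplex K (supp_coords \<alpha>) - U" using a geom_real_in_simplex by blast
        ultimately show "\<alpha> \<in> (\<Union>\<rho>\<in>R. closed_simplex K \<rho> - U)" by blast
      qed
      show "(\<Union>\<rho>\<in>R. closed_simplex K \<rho> - U) \<subseteq> L - U"
        unfolding L_def R_def closed_simplex_def by blast
    qed
    have cl: "closedin (top_of_set L) (closed_simplex K \<rho> - U)" if "\<rho> \<in> R" for \<rho>
    proof -
      have "openin (top_of_set (closed_simplex K \<rho>)) (U \<inter> closed_simplex K \<rho>)"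
        using U that unfolding weak_open_def R_def by blast
      then have "closedin (top_of_set (closed_simplex K \<rho>)) (closed_simplex K \<rho> - (U \<inter> closed_simplex K \<rho>))"
        by (intro closedin_diff) (auto intro: closedin_topspace[of "top_of_set (closed_simplex K \<rho>)", simplified])
      then have 1: "closedin (top_of_set (closed_simplex K \<rho>)) (closed_simplex K \<rho> - U)"
        by (metis Diff_Int2 Int_absorb)
      have "closed_simplex K \<rho> = L \<inter> {\<alpha>. supp_coords \<alpha> \<subseteq> \<rho>}"
        using that unfolding L_def R_def closed_simplex_def by blast
      then have 2: "closedin (top_of_set L) (closed_simplex K \<rho>)"
        by (simp add: closedin_closed_Int closed_supp_subset)
      show ?thesis using closedin_trans[OF 1 2] .
    qed
    have "closedin (top_of_set L) (L - U)"
      unfolding L_eq by (rule closedin_Union) (use finR cl in auto)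
    then have oLU: "openin (top_of_set L) (L \<inter> U)"
      by (simp add: closedin_def Diff_Diff_Int)
    have hT: "continuous_map (subtopology Y T) (top_of_set L) h"
    proof -
      have "h ` topspace (subtopology Y T) \<subseteq> L"
        using T(4) mem unfolding L_def by auto
      then show ?thesis
        by (simp add: continuous_map_in_subtopology continuous_map_from_subtopology cont image_subset_iff_funcset)
    qed
    have "openin (subtopology Y T) {y \<in> topspace (subtopology Y T). h y \<in> L \<inter> U}"
      by (rule openin_continuous_map_preimage[OF hT oLU])
    moreover have "topspace (subtopology Y T) = T"
      using T(1) openin_subset by (simp add: inf_absorb2 openin_subset)
    ultimately have o: "openin Y {y \<in> T. h y \<in> L \<inter> U}"
      using T(1) openin_trans_full by metis
    show "\<exists>T'. openin Y T' \<and> y0 \<in> T' \<and> T' \<subseteq> {y \<in> topspace Y. h y \<in> U}"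
    proof (intro exI conjI)
      show "openin Y {y \<in> T. h y \<in> L \<inter> U}" by (rule o)
      show "y0 \<in> {y \<in> T. h y \<in> L \<inter> U}" using y0 T mem unfolding L_def by auto
      show "{y \<in> T. h y \<in> L \<inter> U} \<subseteq> {y \<in> topspace Y. h y \<in> U}"
        using T(1) openin_subset by blast
    qed
  qed
qed


lemma cont_prod_from_realization:
  assumes cont: "\<And>\<sigma>. \<sigma> \<in> K \<Longrightarrow> continuous_map (prod_topology (top_of_set {0..1::real}) (top_of_set (closed_simplex K \<sigma>))) Y h"
  shows "continuous_map (prod_topology (top_of_set {0..1::real}) (realization K)) Y h"
  unfolding continuous_map
proof (intro conjI allI impI)
  have tsp: "topspace (prod_topology (top_of_set {0..1::real}) (realization K)) = {0..1} \<times> geom_real K"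
    by (simp add: topspace_realization)
  have tsp\<sigma>: "topspace (prod_topology (top_of_set {0..1::real}) (top_of_set (closed_simplex K \<sigma>))) = {0..1} \<times> closed_simplex K \<sigma>" for \<sigma>
    by simp
  show "h ` topspace (prod_topology (top_of_set {0..1::real}) (realization K)) \<subseteq> topspace Y"
  proof
    fix z assume "z \<in> h ` topspace (prod_topology (top_of_set {0..1::real}) (realization K))"
    then obtain t \<alpha> where z: "z = h (t, \<alpha>)" "t \<in> {0..1}" "\<alpha> \<in> geom_real K" using tsp by auto
    have "(t, \<alpha>) \<in> topspace (prod_topology (top_of_set {0..1::real}) (top_of_set (closed_simplex K (supp_coords \<alpha>))))"
      using z geom_real_in_simplex by auto
    then show "z \<in> topspace Y"
      using continuous_map_image_subset_topspace[OF cont[OF geom_real_supp_in[OF z(3)]]] z(1) by blast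
  qed
  fix V assume V: "openin Y V"
  define W where "W = {z \<in> {0..1} \<times> geom_real K. h z \<in> V}"
  have W\<sigma>: "openin (prod_topology (top_of_set {0..1::real}) (top_of_set (closed_simplex K \<sigma>))) {z \<in> {0..1} \<times> closed_simplex K \<sigma>. h z \<in> V}"
    if "\<sigma> \<in> K" for \<sigma>
    using openin_continuous_map_preimage[OF cont[OF that] V] by (simp only: tsp\<sigma>)
  have W\<sigma>W: "{z \<in> {0..1} \<times> closed_simplex K \<sigma>. h z \<in> V} \<subseteq> W" for \<sigma>
    unfolding W_def closed_simplex_def by auto
  have "openin (prod_topology (top_of_set {0..1::real}) (realization K)) W"
  proof (subst openin_subopen, intro ballI)
    fix z assume zW: "z \<in> W"
    obtain t0 \<alpha>0 where z: "z = (t0, \<alpha>0)" by (cases z)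
    have t0: "t0 \<in> {0..1}" and \<alpha>0: "\<alpha>0 \<in> geom_real K" "h (t0, \<alpha>0) \<in> V" using zW z unfolding W_def by auto
    define \<sigma>0 where "\<sigma>0 = supp_coords \<alpha>0"
    have \<sigma>0: "\<sigma>0 \<in> K" "\<alpha>0 \<in> closed_simplex K \<sigma>0"
      unfolding \<sigma>0_def using \<alpha>0 geom_real_supp_in geom_real_in_simplex by auto
    have mem0: "(t0, \<alpha>0) \<in> {z \<in> {0..1} \<times> closed_simplex K \<sigma>0. h z \<in> V}" using t0 \<sigma>0(2) \<alpha>0(2) by simp
    obtain U1 V1 where UV1: "openin (top_of_set {0..1}) U1" "openin (top_of_set (closed_simplex K \<sigma>0)) V1"
      "t0 \<in> U1" "\<alpha>0 \<in> V1" "U1 \<times> V1 \<subseteq> {z \<in> {0..1} \<times> closed_simplex K \<sigma>0. h z \<in> V}"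
      using iffD1[OF openin_prod_topology_alt W\<sigma>[OF \<sigma>0(1)], rule_format, OF mem0] by blast
    obtain Oo where O: "open Oo" "U1 = {0..1} \<inter> Oo" using UV1(1) unfolding openin_open by blast
    have "t0 \<in> Oo" using O(2) UV1(3) by blast
    then obtain \<delta> where \<delta>: "\<delta> > 0" "ball t0 \<delta> \<subseteq> Oo" using openE[OF O(1)] by blast
    define C where "C = cball t0 (\<delta>/2) \<inter> {0..1::real}"
    have compC: "compactin (top_of_set {0..1}) C"
      unfolding C_def by (simp add: compactin_subtopology compact_Int_closed)
    have CU1: "C \<subseteq> U1" unfolding C_def O(2) using \<delta> by (auto simp: subset_eq dist_commute)
    define \<Omega> where "\<Omega> = {\<alpha> \<in> geom_real K. C \<times> {\<alpha>} \<subseteq> W}"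
    have \<Omega>open: "weak_open K \<Omega>"
      unfolding weak_open_def
    proof (intro conjI ballI)
      show "\<Omega> \<subseteq> geom_real K" unfolding \<Omega>_def by auto
      fix \<sigma> assume \<sigma>: "\<sigma> \<in> K"
      show "openin (top_of_set (closed_simplex K \<sigma>)) (\<Omega> \<inter> closed_simplex K \<sigma>)"
      proof (subst openin_subopen, intro ballI)
        fix \<alpha>1 assume \<alpha>1: "\<alpha>1 \<in> \<Omega> \<inter> closed_simplex K \<sigma>"
        have "C \<times> {\<alpha>1} \<subseteq> {z \<in> {0..1} \<times> closed_simplex K \<sigma>. h z \<in> V}"
          using \<alpha>1 unfolding \<Omega>_def W_def by auto
        then obtain U' V' where UV': "openin (top_of_set {0..1}) U'" "openin (top_of_set (closed_simplex K \<sigma>)) V'"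
          "C \<subseteq> U'" "\<alpha>1 \<in> V'" "U' \<times> V' \<subseteq> {z \<in> {0..1} \<times> closed_simplex K \<sigma>. h z \<in> V}"
          using tube_lemma_left[OF W\<sigma>[OF \<sigma>] compC, of \<alpha>1] \<alpha>1 by auto
        have "V' \<subseteq> \<Omega> \<inter> closed_simplex K \<sigma>"
        proof
          fix \<alpha> assume a: "\<alpha> \<in> V'"
          then have "\<alpha> \<in> closed_simplex K \<sigma>" using openin_subset[OF UV'(2)] by auto
          moreover have "C \<times> {\<alpha>} \<subseteq> W" using a UV'(3,5) W\<sigma>W[of \<sigma>] by blast
          ultimately show "\<alpha> \<in> \<Omega> \<inter> closed_simplex K \<sigma>"
            unfolding \<Omega>_def closed_simplex_def by auto
        qed
        then show "\<exists>T. openin (top_of_set (closed_simplex K \<sigma>)) T \<and> \<alpha>1 \<in> T \<and> T \<subseteq> \<Omega> \<inter> closed_simplex K \<sigma>"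
          using UV'(2,4) by blast
      qed
    qed
    define T where "T = ({0..1} \<inter> ball t0 (\<delta>/2)) \<times> \<Omega>"
    show "\<exists>T. openin (prod_topology (top_of_set {0..1::real}) (realization K)) T \<and> z \<in> T \<and> T \<subseteq> W"
    proof (intro exI conjI)
      show "openin (prod_topology (top_of_set {0..1::real}) (realization K)) T"
        unfolding T_def openin_prod_Times_iff
        using \<Omega>open by (simp add: openin_realization openin_open_Int)
      have "C \<times> {\<alpha>0} \<subseteq> W" using CU1 UV1(4,5) W\<sigma>W[of \<sigma>0] by blast
      then show "z \<in> T" unfolding T_def \<Omega>_def z using t0 \<alpha>0 \<delta> by auto
      show "T \<subseteq> W"
      proof
        fix x assume "x \<in> T"
        then obtain t \<alpha> where x: "x = (t, \<alpha>)" "t \<in> {0..1}" "t \<in> ball t0 (\<delta>/2)" "\<alpha> \<in> \<Omega>" unfolding T_def by auto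
        then have "t \<in> C" unfolding C_def by auto
        then show "x \<in> W" using x unfolding \<Omega>_def by auto
      qed
    qed
  qed
  then show "openin (prod_topology (top_of_set {0..1::real}) (realization K))
           {x \<in> topspace (prod_topology (top_of_set {0..1::real}) (realization K)). h x \<in> V}"
    unfolding tsp W_def by simp
qed

lemma cont_from_realization:
  assumes cont: "\<And>\<sigma>. \<sigma> \<in> K \<Longrightarrow> continuous_map (top_of_set (closed_simplex K \<sigma>)) Y f"
  shows "continuous_map (realization K) Y f"
proof -
  have "continuous_map (prod_topology (top_of_set {0..1::real}) (realization K)) Y (f \<circ> snd)"
  proof (rule cont_prod_from_realization)
    fix \<sigma> assume "\<sigma> \<in> K"
    show "continuous_map (prod_topology (top_of_set {0..1::real}) (top_of_set (closed_simplex K \<sigma>))) Y (f \<circ> snd)"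
      by (rule continuous_map_compose[OF continuous_map_snd cont[OF \<open>\<sigma> \<in> K\<close>]])
  qed
  then have "continuous_map (realization K) Y ((f \<circ> snd) \<circ> (\<lambda>\<alpha>. (0::real, \<alpha>)))"
    by (rule continuous_map_compose[rotated]) (auto intro: continuous_map_pairedI)
  then show ?thesis by (simp add: o_def)
qed


lemma VR_down: "\<sigma> \<in> VR X r \<Longrightarrow> \<tau> \<subseteq> \<sigma> \<Longrightarrow> \<tau> \<noteq> {} \<Longrightarrow> \<tau> \<in> VR X r"
  unfolding VR_def by (auto intro: finite_subset)

lemma geom_real_sum_superset:
  assumes "\<beta> \<in> geom_real K" "finite T" "supp_coords \<beta> \<subseteq> T"
  shows "sum \<beta> T = 1"
proof -
  have "sum \<beta> T = sum \<beta> (supp_coords \<beta>)"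
    by (rule sum.mono_neutral_right[OF assms(2,3)]) (auto simp: supp_coords_def)
  then show ?thesis using assms(1) unfolding geom_real_def by simp
qed

lemma geom_real_nonneg: "\<beta> \<in> geom_real K \<Longrightarrow> 0 \<le> \<beta> v"
  unfolding geom_real_def by simp

lemma geom_real_finite: "\<beta> \<in> geom_real K \<Longrightarrow> finite (supp_coords \<beta>)"
  unfolding geom_real_def by simp

lemma mem_geom_VR:
  assumes nn: "\<And>v. 0 \<le> \<beta> v" and fin: "finite T" and sub: "supp_coords \<beta> \<subseteq> T"
    and sum1: "sum \<beta> T = 1" and T: "T \<in> VR X r"
  shows "\<beta> \<in> geom_real (VR X r)"
proof -
  have fs: "finite (supp_coords \<beta>)" using fin sub finite_subset by blast
  have eq: "sum \<beta> T = sum \<beta> (supp_coords \<beta>)"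
    by (rule sum.mono_neutral_right[OF fin sub]) (auto simp: supp_coords_def)
  have ne: "supp_coords \<beta> \<noteq> {}" using eq sum1 by auto
  have "supp_coords \<beta> \<in> VR X r" using VR_down[OF T sub ne] .
  then show ?thesis unfolding geom_real_def using nn fs eq sum1 by auto
qed

lemma VR_close:
  assumes "finite T" "T \<noteq> {}" "T \<subseteq> X" "\<forall>x\<in>T. l1_dist x q < s"
  shows "T \<in> VR X (2 * s)"
proof -
  have "l1_dist x y < 2 * s" if "x \<in> T" "y \<in> T" for x y
  proof -
    have "l1_dist x q < s" "l1_dist y q < s" using assms(4) that by auto
    then show ?thesis using l1_dist_triangle[of x y q] l1_dist_sym[of q y] by linarith
  qed
  then show ?thesis unfolding VR_def using assms by auto
qed

definition fmap :: "((real \<times> real) \<Rightarrow> real) \<Rightarrow> real \<times> real" where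
  "fmap \<alpha> = (\<Sum>v\<in>supp_coords \<alpha>. \<alpha> v *\<^sub>R v)"

lemma fmap_superset:
  assumes "finite T" "supp_coords \<alpha> \<subseteq> T"
  shows "fmap \<alpha> = (\<Sum>v\<in>T. \<alpha> v *\<^sub>R v)"
  unfolding fmap_def
  by (rule sum.mono_neutral_left[OF assms]) (auto simp: supp_coords_def)

lemma fmap_close:
  assumes a: "\<alpha> \<in> geom_real (VR X (2 * s))"
  shows "\<exists>x\<in>supp_coords \<alpha>. l1_dist (fmap \<alpha>) x < s"
proof -
  have S: "supp_coords \<alpha> \<in> VR X (2 * s)" using a by (rule geom_real_supp_in)
  have fin: "finite (supp_coords \<alpha>)" using a by (rule geom_real_finite)
  have sum1: "sum \<alpha> (supp_coords \<alpha>) = 1" using a unfolding geom_real_def by simp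
  then have ne: "supp_coords \<alpha> \<noteq> {}" by auto
  show ?thesis
  proof (rule hull_core[of "supp_coords \<alpha>" \<alpha> 0 "fmap \<alpha>" 0 s])
    show "finite (supp_coords \<alpha>)" by (rule fin)
    show "supp_coords \<alpha> \<noteq> {}" by (rule ne)
    show "(0::real) \<le> 0" by simp
    show "(0::real) = 0 \<or> (\<forall>x\<in>supp_coords \<alpha>. l1_dist 0 x < s)" by simp
    show "\<forall>x\<in>supp_coords \<alpha>. 0 \<le> \<alpha> x" using geom_real_nonneg[OF a] by blast
    show "0 + sum \<alpha> (supp_coords \<alpha>) = 1" using sum1 by simp
    show "fmap \<alpha> = 0 *\<^sub>R 0 + (\<Sum>x\<in>supp_coords \<alpha>. \<alpha> x *\<^sub>R x)" unfolding fmap_def by simp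
    show "\<forall>x\<in>supp_coords \<alpha>. \<forall>x'\<in>supp_coords \<alpha>. l1_dist x x' < 2 * s"
      using S unfolding VR_def by blast
  qed
qed

lemma fmap_in_nbhd:
  assumes a: "\<alpha> \<in> geom_real (VR X (2 * s))"
  shows "fmap \<alpha> \<in> l1_nbhd X s"
proof -
  obtain x where x: "x \<in> supp_coords \<alpha>" "l1_dist (fmap \<alpha>) x < s" using fmap_close[OF a] by blast
  have "supp_coords \<alpha> \<subseteq> X" using geom_real_supp_in[OF a] unfolding VR_def by simp
  then have "x \<in> X" using x(1) by blast
  moreover have "l1_dist x (fmap \<alpha>) < s" using x(2) l1_dist_sym[of x "fmap \<alpha>"] by simp
  ultimately show ?thesis unfolding l1_nbhd_def by blast
qed

lemma closed_simplex_VR_finite: "\<sigma> \<in> VR X r \<Longrightarrow> finite \<sigma>"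
  unfolding VR_def by simp

lemma continuous_on_l1_dist [continuous_intros]:
  "continuous_on S f \<Longrightarrow> continuous_on S g \<Longrightarrow> continuous_on S (\<lambda>z. l1_dist (f z) (g z))"
  unfolding l1_dist_def by (intro continuous_intros)

lemma fmap_cont_simplex:
  assumes "\<sigma> \<in> VR X r"
  shows "continuous_on (closed_simplex (VR X r) \<sigma>) fmap"
proof -
  have fin: "finite \<sigma>" using assms by (rule closed_simplex_VR_finite)
  have "continuous_on (closed_simplex (VR X r) \<sigma>) (\<lambda>\<alpha>. \<Sum>v\<in>\<sigma>. \<alpha> v *\<^sub>R v)"
    by (intro continuous_intros continuous_on_product_coordinates[THEN continuous_on_subset]) auto
  moreover have "\<And>\<alpha>. \<alpha> \<in> closed_simplex (VR X r) \<sigma> \<Longrightarrow> fmap \<alpha> = (\<Sum>v\<in>\<sigma>. \<alpha> v *\<^sub>R v)"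
    using fmap_superset[OF fin] unfolding closed_simplex_def by blast
  ultimately show ?thesis using continuous_on_cong by fastforce
qed

lemma fmap_cont:
  assumes "s > 0"
  shows "continuous_map (realization (VR X (2 * s))) (top_of_set (l1_nbhd X s)) fmap"
proof (rule cont_from_realization)
  fix \<sigma> assume \<sigma>: "\<sigma> \<in> VR X (2 * s)"
  have "fmap ` closed_simplex (VR X (2 * s)) \<sigma> \<subseteq> l1_nbhd X s"
    using fmap_in_nbhd unfolding closed_simplex_def by blast
  then show "continuous_map (top_of_set (closed_simplex (VR X (2 * s)) \<sigma>)) (top_of_set (l1_nbhd X s)) fmap"
    using fmap_cont_simplex[OF \<sigma>] by (simp add: continuous_map_in_subtopology image_subset_iff_funcset)
qed


definition phi :: "real \<Rightarrow> real \<Rightarrow> real" where "phi s d = max 0 (s - d)"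

definition Zs :: "real \<Rightarrow> ((real \<times> real) \<Rightarrow> real) \<Rightarrow> real" where
  "Zs s \<alpha> = (\<Sum>v\<in>supp_coords \<alpha>. \<alpha> v * phi s (l1_dist v (fmap \<alpha>)))"

definition aprime :: "real \<Rightarrow> ((real \<times> real) \<Rightarrow> real) \<Rightarrow> ((real \<times> real) \<Rightarrow> real)" where
  "aprime s \<alpha> = (\<lambda>v. \<alpha> v * phi s (l1_dist v (fmap \<alpha>)) / Zs s \<alpha>)"

lemma phi_nonneg: "0 \<le> phi s d" unfolding phi_def by simp

lemma Zs_pos:
  assumes a: "\<alpha> \<in> geom_real (VR X (2 * s))"
  shows "Zs s \<alpha> > 0"
proof -
  obtain x where x: "x \<in> supp_coords \<alpha>" "l1_dist (fmap \<alpha>) x < s" using fmap_close[OF a] by blast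
  have "\<alpha> x > 0" using x(1) geom_real_nonneg[OF a, of x] unfolding supp_coords_def by auto
  moreover have "phi s (l1_dist x (fmap \<alpha>)) > 0"
    using x(2) l1_dist_sym[of x "fmap \<alpha>"] unfolding phi_def by simp
  ultimately have "0 < \<alpha> x * phi s (l1_dist x (fmap \<alpha>))" by simp
  then show ?thesis unfolding Zs_def
    using geom_real_finite[OF a] x(1)
    by (intro sum_pos2[where i=x]) (auto intro!: mult_nonneg_nonneg geom_real_nonneg[OF a] phi_nonneg)
qed

lemma aprime_nonneg: "\<alpha> \<in> geom_real (VR X (2 * s)) \<Longrightarrow> 0 \<le> aprime s \<alpha> v"
  unfolding aprime_def using Zs_pos[of \<alpha> X s] geom_real_nonneg[of \<alpha> _ v] phi_nonneg
  by (simp add: less_imp_le)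

lemma supp_aprime:
  "supp_coords (aprime s \<alpha>) \<subseteq> {v \<in> supp_coords \<alpha>. l1_dist v (fmap \<alpha>) < s}"
  unfolding supp_coords_def aprime_def phi_def by (auto simp: max_def split: if_splits)

lemma sum_aprime:
  assumes a: "\<alpha> \<in> geom_real (VR X (2 * s))"
  shows "sum (aprime s \<alpha>) (supp_coords \<alpha>) = 1"
  unfolding aprime_def using Zs_pos[OF a]
  by (simp add: sum_divide_distrib[symmetric] Zs_def[symmetric])

lemma aprime_geom:
  assumes a: "\<alpha> \<in> geom_real (VR X (2 * s))"
  shows "aprime s \<alpha> \<in> geom_real (VR X (2 * s))"
proof (rule mem_geom_VR[OF _ geom_real_finite[OF a]])
  show "\<And>v. 0 \<le> aprime s \<alpha> v" using aprime_nonneg[OF a] .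
  show "supp_coords (aprime s \<alpha>) \<subseteq> supp_coords \<alpha>" using supp_aprime by blast
  show "sum (aprime s \<alpha>) (supp_coords \<alpha>) = 1" using sum_aprime[OF a] .
  show "supp_coords \<alpha> \<in> VR X (2 * s)" using geom_real_supp_in[OF a] .
qed

lemma Zs_superset:
  assumes "finite T" "supp_coords \<alpha> \<subseteq> T"
  shows "Zs s \<alpha> = (\<Sum>v\<in>T. \<alpha> v * phi s (l1_dist v (fmap \<alpha>)))"
  unfolding Zs_def
  by (rule sum.mono_neutral_left[OF assms]) (auto simp: supp_coords_def)

lemma continuous_on_phi [continuous_intros]:
  "continuous_on S f \<Longrightarrow> continuous_on S (\<lambda>z. phi s (f z))"
  unfolding phi_def by (intro continuous_intros)

lemma coord_cont: "continuous_on S (\<lambda>\<alpha>::'a \<Rightarrow> real. \<alpha> v)"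
  by (rule continuous_on_subset[OF continuous_on_product_coordinates]) simp

lemma aprime_cont_simplex:
  assumes \<sigma>: "\<sigma> \<in> VR X (2 * s)"
  shows "continuous_on (closed_simplex (VR X (2 * s)) \<sigma>) (\<lambda>\<alpha>. aprime s \<alpha> v)"
proof -
  let ?D = "closed_simplex (VR X (2 * s)) \<sigma>"
  have fin: "finite \<sigma>" using \<sigma> by (rule closed_simplex_VR_finite)
  have fc: "continuous_on ?D fmap" using fmap_cont_simplex[OF \<sigma>] .
  have nz: "\<forall>\<alpha>\<in>?D. (\<Sum>u\<in>\<sigma>. \<alpha> u * phi s (l1_dist u (fmap \<alpha>))) \<noteq> 0"
  proof
    fix \<alpha> assume "\<alpha> \<in> ?D"
    then have "\<alpha> \<in> geom_real (VR X (2 * s))" "supp_coords \<alpha> \<subseteq> \<sigma>" unfolding closed_simplex_def by auto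
    then show "(\<Sum>u\<in>\<sigma>. \<alpha> u * phi s (l1_dist u (fmap \<alpha>))) \<noteq> 0"
      using Zs_pos Zs_superset[OF fin] by (metis less_irrefl)
  qed
  have "continuous_on ?D (\<lambda>\<alpha>. \<alpha> v * phi s (l1_dist v (fmap \<alpha>)) / (\<Sum>u\<in>\<sigma>. \<alpha> u * phi s (l1_dist u (fmap \<alpha>))))"
    by (rule continuous_on_divide[OF _ _ nz]) (intro continuous_intros coord_cont fc)+
  moreover have "\<And>\<alpha>. \<alpha> \<in> ?D \<Longrightarrow> aprime s \<alpha> v = \<alpha> v * phi s (l1_dist v (fmap \<alpha>)) / (\<Sum>u\<in>\<sigma>. \<alpha> u * phi s (l1_dist u (fmap \<alpha>)))"
    unfolding aprime_def using Zs_superset[OF fin] unfolding closed_simplex_def by auto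
  ultimately show ?thesis using continuous_on_cong by fastforce
qed


lemma open_l1_ball: "open {y. l1_dist x y < s}"
  by (rule open_Collect_less) (intro continuous_intros)+

lemma l1_nbhd_open: "open (l1_nbhd X s)"
proof -
  have "l1_nbhd X s = (\<Union>x\<in>X. {y. l1_dist x y < s})" unfolding l1_nbhd_def by auto
  then show ?thesis using open_l1_ball by auto
qed

lemma g_exists:
  obtains g :: "real \<times> real \<Rightarrow> ((real \<times> real) \<Rightarrow> real)" where
    "continuous_on (l1_nbhd X s) g"
    "\<And>y. y \<in> l1_nbhd X s \<Longrightarrow> g y \<in> geom_real (VR X (2 * s))"
    "\<And>y x. y \<in> l1_nbhd X s \<Longrightarrow> x \<in> supp_coords (g y) \<Longrightarrow> x \<in> X \<and> l1_dist x y < s"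
    "\<And>y. y \<in> l1_nbhd X s \<Longrightarrow> \<exists>T F. open T \<and> y \<in> T \<and> finite F \<and> (\<forall>y'\<in>T \<inter> l1_nbhd X s. supp_coords (g y') \<subseteq> F)"
proof -
  let ?N = "l1_nbhd X s"
  define ball1 where "ball1 x = {y. l1_dist x y < s}" for x
  have cov0: "?N \<subseteq> \<Union>(ball1 ` X)" unfolding l1_nbhd_def ball1_def by auto
  have op0: "\<And>T. T \<in> ball1 ` X \<Longrightarrow> open T" unfolding ball1_def using open_l1_ball by auto
  obtain C' where cov: "?N \<subseteq> \<Union>C'"
    and ref: "\<And>U. U \<in> C' \<Longrightarrow> open U \<and> (\<exists>T. T \<in> ball1 ` X \<and> U \<subseteq> T)"
    and lf: "\<And>y. y \<in> ?N \<Longrightarrow> \<exists>V. open V \<and> y \<in> V \<and> finite {U. U \<in> C' \<and> (U \<inter> V \<noteq> {})}"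
    using paracompact[OF cov0 op0] by blast
  obtain F :: "(real \<times> real) set \<Rightarrow> real \<times> real \<Rightarrow> real"
    where F1: "\<And>U. U \<in> C' \<Longrightarrow> continuous_on ?N (F U) \<and> (\<forall>y \<in> ?N. 0 \<le> F U y)"
      and F2: "\<And>y U. \<lbrakk>U \<in> C'; y \<in> ?N; y \<notin> U\<rbrakk> \<Longrightarrow> F U y = 0"
      and F3: "\<And>y. y \<in> ?N \<Longrightarrow> supp_sum (\<lambda>W. F W y) C' = 1"
      and F4: "\<And>y. y \<in> ?N \<Longrightarrow> \<exists>V. open V \<and> y \<in> V \<and> finite {U \<in> C'. \<exists>y\<in>V. F U y \<noteq> 0}"
  proof (rule subordinate_partition_of_unity[OF cov])
    show "\<And>T. T \<in> C' \<Longrightarrow> open T" using ref by blast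
    show "\<And>y. y \<in> ?N \<Longrightarrow> \<exists>V. open V \<and> y \<in> V \<and> finite {U \<in> C'. U \<inter> V \<noteq> {}}" using lf by simp
  qed blast+
  have "\<forall>U\<in>C'. \<exists>x. x \<in> X \<and> U \<subseteq> ball1 x" using ref by blast
  from bchoice[OF this] obtain c where c0: "\<forall>U\<in>C'. c U \<in> X \<and> U \<subseteq> ball1 (c U)" by blast
  then have c: "\<And>U. U \<in> C' \<Longrightarrow> c U \<in> X \<and> U \<subseteq> ball1 (c U)" by blast
  define G where "G y = {U \<in> C'. F U y \<noteq> 0}" for y
  define g where "g y = (\<lambda>x. sum (\<lambda>U. F U y) {U \<in> G y. c U = x})" for y
  have "\<forall>y\<in>?N. \<exists>V. open V \<and> y \<in> V \<and> finite {U \<in> C'. \<exists>y\<in>V. F U y \<noteq> 0}"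
    using F4 by blast
  from bchoice[OF this] obtain Vf where Vf0: "\<forall>y\<in>?N. open (Vf y) \<and> y \<in> Vf y \<and> finite {U \<in> C'. \<exists>y\<in>Vf y. F U y \<noteq> 0}"
    by blast
  then have Vf: "\<And>y. y \<in> ?N \<Longrightarrow> open (Vf y) \<and> y \<in> Vf y \<and> finite {U \<in> C'. \<exists>y\<in>Vf y. F U y \<noteq> 0}"
    by blast
  have GV: "G y \<subseteq> {U \<in> C'. \<exists>y\<in>Vf y0. F U y \<noteq> 0}" if "y \<in> Vf y0" for y y0
    unfolding G_def using that by auto
  have finG: "finite (G y)" if "y \<in> ?N" for y
    using Vf[OF that] GV[of y y] finite_subset by blast
  have suppg: "supp_coords (g y) \<subseteq> c ` G y" for y
  proof
    fix x assume x: "x \<in> supp_coords (g y)"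
    show "x \<in> c ` G y"
    proof (rule ccontr)
      assume "x \<notin> c ` G y"
      then have e: "{U \<in> G y. c U = x} = {}" by blast
      have "g y x = 0" unfolding g_def e by simp
      then show False using x unfolding supp_coords_def by simp
    qed
  qed
  have closeG: "x \<in> X \<and> l1_dist x y < s" if yN: "y \<in> ?N" and xc: "x \<in> c ` G y" for x y
  proof -
    obtain U where U: "U \<in> C'" "F U y \<noteq> 0" "x = c U" using xc unfolding G_def by blast
    have "y \<in> U" using F2[OF U(1) yN] U(2) by blast
    then show ?thesis using c[OF U(1)] U(3) unfolding ball1_def by blast
  qed
  have gnn: "0 \<le> g y x" if "y \<in> ?N" for x y
    unfolding g_def G_def using F1 that by (auto intro: sum_nonneg)
  have sumG: "sum (g y) (c ` G y) = 1" if "y \<in> ?N" for y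
  proof -
    have "sum (g y) (c ` G y) = sum (\<lambda>U. F U y) (G y)"
      unfolding g_def using sum.image_gen[OF finG[OF that], of "\<lambda>U. F U y" c] by simp
    also have "\<dots> = supp_sum (\<lambda>W. F W y) C'"
      unfolding supp_sum_def support_on_def G_def by simp
    finally show ?thesis using F3[OF that] by simp
  qed
  have geom: "g y \<in> geom_real (VR X (2 * s))" if "y \<in> ?N" for y
  proof (rule mem_geom_VR[OF _ _ suppg sumG[OF that]])
    show "\<And>v. 0 \<le> g y v" using gnn[OF that] .
    show fin: "finite (c ` G y)" using finG[OF that] by simp
    have "c ` G y \<noteq> {}" using sumG[OF that] by auto
    then show "c ` G y \<in> VR X (2 * s)"
      using VR_close[OF fin _ _ , of X y s] closeG[OF that] by blast
  qed
  have loceq: "g y x = sum (\<lambda>U. F U y) {U \<in> {U \<in> C'. \<exists>y\<in>Vf y0. F U y \<noteq> 0}. c U = x}"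
    if "y0 \<in> ?N" "y \<in> Vf y0" "y \<in> ?N" for y y0 x
    unfolding g_def
  proof (rule sum.mono_neutral_left)
    show "finite {U \<in> {U \<in> C'. \<exists>y\<in>Vf y0. F U y \<noteq> 0}. c U = x}"
      using Vf[OF that(1)] by (rule finite_subset[rotated, OF conjunct2[OF conjunct2]]) blast
    show "{U \<in> G y. c U = x} \<subseteq> {U \<in> {U \<in> C'. \<exists>y\<in>Vf y0. F U y \<noteq> 0}. c U = x}"
      using GV[OF that(2)] by blast
    show "\<forall>i\<in>{U \<in> {U \<in> C'. \<exists>y\<in>Vf y0. F U y \<noteq> 0}. c U = x} - {U \<in> G y. c U = x}. F i y = 0"
      unfolding G_def by blast
  qed
  have contloc: "continuous_on (?N \<inter> Vf y0) g" if y0N: "y0 \<in> ?N" for y0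
  proof (rule continuous_on_coordinatewise_then_product)
    fix x
    let ?S = "{U \<in> {U \<in> C'. \<exists>y\<in>Vf y0. F U y \<noteq> 0}. c U = x}"
    have "continuous_on (?N \<inter> Vf y0) (\<lambda>y. sum (\<lambda>U. F U y) ?S)"
    proof (rule continuous_on_sum)
      fix U assume "U \<in> ?S"
      then have U: "U \<in> C'" by blast
      show "continuous_on (?N \<inter> Vf y0) (F U)"
        by (rule continuous_on_subset[OF conjunct1[OF F1[OF U]]]) blast
    qed
    moreover have "\<And>y. y \<in> ?N \<inter> Vf y0 \<Longrightarrow> sum (\<lambda>U. F U y) ?S = g y x"
    proof -
      fix y assume y: "y \<in> ?N \<inter> Vf y0"
      show "sum (\<lambda>U. F U y) ?S = g y x" using loceq[OF y0N, of y x] y by simp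
    qed
    ultimately show "continuous_on (?N \<inter> Vf y0) (\<lambda>y. g y x)"
      by (rule continuous_on_eq)
  qed
  have "continuous_on (\<Union>((\<lambda>y0. ?N \<inter> Vf y0) ` ?N)) g"
  proof (rule continuous_on_open_Union)
    fix S assume "S \<in> (\<lambda>y0. ?N \<inter> Vf y0) ` ?N"
    then obtain y0 where y0: "y0 \<in> ?N" "S = ?N \<inter> Vf y0" by blast
    show "open S" using y0 Vf[OF y0(1)] l1_nbhd_open by auto
    show "continuous_on S g" using y0 contloc by simp
  qed
  moreover have "\<Union>((\<lambda>y0. ?N \<inter> Vf y0) ` ?N) = ?N" using Vf by auto
  ultimately have contg: "continuous_on ?N g" by simp
  show thesis
  proof (rule that[OF contg geom])
    show "\<And>y x. y \<in> ?N \<Longrightarrow> x \<in> supp_coords (g y) \<Longrightarrow> x \<in> X \<and> l1_dist x y < s"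
      by (meson closeG subsetD suppg)
    fix y0 assume y0: "y0 \<in> ?N"
    show "\<exists>T F. open T \<and> y0 \<in> T \<and> finite F \<and> (\<forall>y'\<in>T \<inter> ?N. supp_coords (g y') \<subseteq> F)"
    proof (intro exI conjI ballI)
      show "open (Vf y0)" "y0 \<in> Vf y0" using Vf[OF y0] by auto
      show "finite (c ` {U \<in> C'. \<exists>y\<in>Vf y0. F U y \<noteq> 0})" using Vf[OF y0] by simp
      fix y' assume "y' \<in> Vf y0 \<inter> ?N"
      then show "supp_coords (g y') \<subseteq> c ` {U \<in> C'. \<exists>y\<in>Vf y0. F U y \<noteq> 0}"
        using suppg[of y'] GV[of y' y0] by blast
    qed
  qed
qed


lemma comb_supp: "supp_coords (\<lambda>v. a * \<beta> v + b * \<gamma> v) \<subseteq> supp_coords \<beta> \<union> supp_coords \<gamma>"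
  by (auto simp: supp_coords_def)

lemma sum_comb: "sum (\<lambda>v. a * \<beta> v + b * \<gamma> v) T = a * sum \<beta> T + b * (sum \<gamma> T :: real)"
  by (simp add: sum.distrib sum_distrib_left[symmetric])

lemma top01: "subtopology euclideanreal {0..1} = top_of_set {0..1::real}" by simp

lemma homotopy_N:
  assumes gc: "continuous_on (l1_nbhd X s) g"
    and gg: "\<And>y. y \<in> l1_nbhd X s \<Longrightarrow> g y \<in> geom_real (VR X (2 * s))"
    and g3: "\<And>y x. y \<in> l1_nbhd X s \<Longrightarrow> x \<in> supp_coords (g y) \<Longrightarrow> x \<in> X \<and> l1_dist x y < s"
    and fgc: "continuous_on (l1_nbhd X s) (fmap \<circ> g)"
  shows "homotopic_with (\<lambda>x. True) (top_of_set (l1_nbhd X s)) (top_of_set (l1_nbhd X s)) (fmap \<circ> g) id"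
proof -
  let ?N = "l1_nbhd X s"
  define h where "h = (\<lambda>z::real \<times> (real \<times> real). (1 - fst z) *\<^sub>R fmap (g (snd z)) + fst z *\<^sub>R snd z)"
  have inN: "h (t, y) \<in> ?N" if t: "t \<in> {0..1}" and y: "y \<in> ?N" for t y
  proof -
    let ?S = "supp_coords (g y)"
    have gy: "g y \<in> geom_real (VR X (2 * s))" using gg[OF y] .
    have fin: "finite ?S" using geom_real_finite[OF gy] .
    have sum1: "sum (g y) ?S = 1" using gy unfolding geom_real_def by simp
    then have ne: "?S \<noteq> {}" by auto
    have cl: "\<And>x. x \<in> ?S \<Longrightarrow> x \<in> X \<and> l1_dist x y < s" using g3[OF y] by blast
    have "\<exists>x\<in>?S. l1_dist (h (t, y)) x < s"
    proof (rule hull_core[of ?S "\<lambda>x. (1 - t) * g y x" t "h (t, y)" y s])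
      show "finite ?S" by (rule fin)
      show "?S \<noteq> {}" by (rule ne)
      show "\<forall>x\<in>?S. 0 \<le> (1 - t) * g y x" using t geom_real_nonneg[OF gy] by simp
      show "0 \<le> t" using t by simp
      show "t + (\<Sum>x\<in>?S. (1 - t) * g y x) = 1" using sum1 by (simp add: sum_distrib_left[symmetric])
      show "h (t, y) = t *\<^sub>R y + (\<Sum>x\<in>?S. ((1 - t) * g y x) *\<^sub>R x)"
        unfolding h_def fmap_def by (simp add: scaleR_sum_right)
      show "\<forall>x\<in>?S. \<forall>x'\<in>?S. l1_dist x x' < 2 * s"
      proof (intro ballI)
        fix x x' assume "x \<in> ?S" "x' \<in> ?S"
        then have "l1_dist x y < s" "l1_dist x' y < s" using cl by auto
        then show "l1_dist x x' < 2 * s" using l1_dist_triangle[of x x' y] l1_dist_sym[of y x'] by linarith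
      qed
      show "t = 0 \<or> (\<forall>x\<in>?S. l1_dist y x < s)" using cl l1_dist_sym by metis
    qed
    then obtain x where x: "x \<in> ?S" "l1_dist (h (t, y)) x < s" by blast
    have "x \<in> X" using cl[OF x(1)] by blast
    moreover have "l1_dist x (h (t, y)) < s" using x(2) l1_dist_sym[of x] by simp
    ultimately show ?thesis unfolding l1_nbhd_def by blast
  qed
  have hc: "continuous_on ({0..1} \<times> ?N) h"
  proof -
    have "continuous_on ({0..1} \<times> ?N) (\<lambda>z. (fmap \<circ> g) (snd z))"
      by (rule continuous_on_compose2[OF fgc continuous_on_snd]) auto
    then have c2: "continuous_on ({0..1} \<times> ?N) (\<lambda>z. fmap (g (snd z)))" by (simp add: o_def)
    show ?thesis unfolding h_def by (intro continuous_intros c2)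
  qed
  show ?thesis
    unfolding homotopic_with_def
  proof (intro exI conjI allI ballI)
    show "continuous_map (prod_topology (top_of_set {0..1}) (top_of_set ?N)) (top_of_set ?N) h"
      using hc inN by (auto simp: continuous_map_in_subtopology)
    show "\<And>y. h (0, y) = (fmap \<circ> g) y" unfolding h_def by simp
    show "\<And>y. h (1, y) = id y" unfolding h_def by simp
  qed simp
qed


lemma homotopy_cont_crit:
  assumes c: "\<And>\<sigma>. \<sigma> \<in> K \<Longrightarrow> continuous_on ({0..1::real} \<times> closed_simplex K \<sigma>) H"
    and m: "\<And>t \<alpha>. t \<in> {0..1::real} \<Longrightarrow> \<alpha> \<in> geom_real K \<Longrightarrow> H (t, \<alpha>) \<in> geom_real K"
    and l: "\<And>\<sigma> z. \<sigma> \<in> K \<Longrightarrow> z \<in> {0..1::real} \<times> closed_simplex K \<sigma> \<Longrightarrow>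
           \<exists>T F. openin (top_of_set ({0..1} \<times> closed_simplex K \<sigma>)) T \<and> z \<in> T \<and> finite F \<and> (\<forall>z'\<in>T. supp_coords (H z') \<subseteq> F)"
  shows "continuous_map (prod_topology (top_of_set {0..1::real}) (realization K)) (realization K) H"
proof (rule cont_prod_from_realization)
  fix \<sigma> assume \<sigma>: "\<sigma> \<in> K"
  have "continuous_map (top_of_set ({0..1} \<times> closed_simplex K \<sigma>)) (realization K) H"
  proof (rule cont_into_realization)
    show "continuous_map (top_of_set ({0..1} \<times> closed_simplex K \<sigma>)) euclidean H"
      using c[OF \<sigma>] by simp
    fix z assume z: "z \<in> topspace (top_of_set ({0..1::real} \<times> closed_simplex K \<sigma>))"
    then obtain t \<alpha> where "z = (t, \<alpha>)" "t \<in> {0..1}" "\<alpha> \<in> closed_simplex K \<sigma>" by auto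
    then show "H z \<in> geom_real K" using m unfolding closed_simplex_def by auto
    show "\<exists>T F. openin (top_of_set ({0..1} \<times> closed_simplex K \<sigma>)) T \<and> z \<in> T \<and> finite F \<and> (\<forall>y'\<in>T. supp_coords (H y') \<subseteq> F)"
      using l[OF \<sigma>] z by simp
  qed
  then show "continuous_map (prod_topology (top_of_set {0..1}) (top_of_set (closed_simplex K \<sigma>))) (realization K) H"
    by simp
qed

lemma snd_coord_cont: "continuous_on S (\<lambda>z::real \<times> ('a \<Rightarrow> real). snd z v)"
  by (rule continuous_on_compose2[OF coord_cont continuous_on_snd]) auto

lemma homotopy_K1:
  "homotopic_with (\<lambda>x. True) (realization (VR X (2 * s))) (realization (VR X (2 * s))) id (aprime s)"
proof -
  let ?K = "VR X (2 * s)"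
  define h where "h = (\<lambda>z::real \<times> ((real \<times> real) \<Rightarrow> real). (\<lambda>v. (1 - fst z) * snd z v + fst z * aprime s (snd z) v))"
  have hc: "continuous_map (prod_topology (top_of_set {0..1::real}) (realization ?K)) (realization ?K) h"
  proof (rule homotopy_cont_crit)
    fix \<sigma> assume \<sigma>: "\<sigma> \<in> ?K"
    show "continuous_on ({0..1::real} \<times> closed_simplex ?K \<sigma>) h"
      unfolding h_def
    proof (rule continuous_on_coordinatewise_then_product)
      fix v
      have "continuous_on ({0..1::real} \<times> closed_simplex ?K \<sigma>) (\<lambda>z. aprime s (snd z) v)"
        by (rule continuous_on_compose2[OF aprime_cont_simplex[OF \<sigma>] continuous_on_snd]) auto
      then show "continuous_on ({0..1::real} \<times> closed_simplex ?K \<sigma>) (\<lambda>z. (1 - fst z) * snd z v + fst z * aprime s (snd z) v)"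
        by (intro continuous_intros snd_coord_cont)
    qed
    fix z :: "real \<times> ((real \<times> real) \<Rightarrow> real)" assume z: "z \<in> {0..1::real} \<times> closed_simplex ?K \<sigma>"
    show "\<exists>T F. openin (top_of_set ({0..1::real} \<times> closed_simplex ?K \<sigma>)) T \<and> z \<in> T \<and> finite F \<and> (\<forall>z'\<in>T. supp_coords (h z') \<subseteq> F)"
    proof (intro exI conjI ballI)
      show "openin (top_of_set ({0..1::real} \<times> closed_simplex ?K \<sigma>)) ({0..1::real} \<times> closed_simplex ?K \<sigma>)" by simp
      show "z \<in> {0..1::real} \<times> closed_simplex ?K \<sigma>" by (rule z)
      show "finite \<sigma>" using \<sigma> by (rule closed_simplex_VR_finite)
      fix z' :: "real \<times> ((real \<times> real) \<Rightarrow> real)" assume "z' \<in> {0..1::real} \<times> closed_simplex ?K \<sigma>"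
      then have "supp_coords (snd z') \<subseteq> \<sigma>" unfolding closed_simplex_def by auto
      then show "supp_coords (h z') \<subseteq> \<sigma>"
        unfolding h_def using comb_supp[of "1 - fst z'" "snd z'" "fst z'" "aprime s (snd z')"] supp_aprime[of s "snd z'"]
        by blast
    qed
  next
    fix t \<alpha> assume t: "t \<in> {0..1::real}" and a: "\<alpha> \<in> geom_real ?K"
    show "h (t, \<alpha>) \<in> geom_real ?K"
    proof (rule mem_geom_VR[OF _ geom_real_finite[OF a] _ _ geom_real_supp_in[OF a]])
      show "\<And>v. 0 \<le> h (t, \<alpha>) v" unfolding h_def
        using t geom_real_nonneg[OF a] aprime_nonneg[OF a] by simp
      show "supp_coords (h (t, \<alpha>)) \<subseteq> supp_coords \<alpha>"
        unfolding h_def using comb_supp[of "1 - t" \<alpha> t "aprime s \<alpha>"] supp_aprime[of s \<alpha>] by auto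
      show "sum (h (t, \<alpha>)) (supp_coords \<alpha>) = 1"
        unfolding h_def using sum_comb[of "1 - t" \<alpha> t "aprime s \<alpha>"] sum_aprime[OF a] a
        by (simp add: geom_real_def)
    qed
  qed
  show ?thesis
    unfolding homotopic_with_def
  proof (intro exI conjI allI ballI)
    show "continuous_map (prod_topology (top_of_set {0..1}) (realization ?K)) (realization ?K) h" by (rule hc)
    show "\<And>\<alpha>. h (0, \<alpha>) = id \<alpha>" unfolding h_def by simp
    show "\<And>\<alpha>. h (1, \<alpha>) = aprime s \<alpha>" unfolding h_def by simp
  qed simp
qed


lemma homotopy_K2:
  assumes gc: "continuous_on (l1_nbhd X s) g"
    and gg: "\<And>y. y \<in> l1_nbhd X s \<Longrightarrow> g y \<in> geom_real (VR X (2 * s))"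
    and g3: "\<And>y x. y \<in> l1_nbhd X s \<Longrightarrow> x \<in> supp_coords (g y) \<Longrightarrow> x \<in> X \<and> l1_dist x y < s"
    and g4: "\<And>y. y \<in> l1_nbhd X s \<Longrightarrow> \<exists>T F. open T \<and> y \<in> T \<and> finite F \<and> (\<forall>y'\<in>T \<inter> l1_nbhd X s. supp_coords (g y') \<subseteq> F)"
  shows "homotopic_with (\<lambda>x. True) (realization (VR X (2 * s))) (realization (VR X (2 * s))) (aprime s) (g \<circ> fmap)"
proof -
  let ?K = "VR X (2 * s)"
  let ?N = "l1_nbhd X s"
  define h where "h = (\<lambda>z::real \<times> ((real \<times> real) \<Rightarrow> real). (\<lambda>v. (1 - fst z) * aprime s (snd z) v + fst z * g (fmap (snd z)) v))"
  have hc: "continuous_map (prod_topology (top_of_set {0..1::real}) (realization ?K)) (realization ?K) h"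
  proof (rule homotopy_cont_crit)
    fix \<sigma> assume \<sigma>: "\<sigma> \<in> ?K"
    have fN: "fmap ` closed_simplex ?K \<sigma> \<subseteq> ?N"
      using fmap_in_nbhd unfolding closed_simplex_def by blast
    have "continuous_on ({0..1::real} \<times> closed_simplex ?K \<sigma>) (\<lambda>z. fmap (snd z))"
      by (rule continuous_on_compose2[OF fmap_cont_simplex[OF \<sigma>] continuous_on_snd]) auto
    then have fsc: "continuous_on ({0..1::real} \<times> closed_simplex ?K \<sigma>) (fmap \<circ> snd)"
      by (simp add: o_def)
    show "continuous_on ({0..1::real} \<times> closed_simplex ?K \<sigma>) h"
      unfolding h_def
    proof (rule continuous_on_coordinatewise_then_product)
      fix v
      have c1: "continuous_on ({0..1::real} \<times> closed_simplex ?K \<sigma>) (\<lambda>z. aprime s (snd z) v)"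
        by (rule continuous_on_compose2[OF aprime_cont_simplex[OF \<sigma>] continuous_on_snd]) auto
      have "continuous_on (closed_simplex ?K \<sigma>) (\<lambda>\<alpha>. g (fmap \<alpha>) v)"
        by (rule continuous_on_compose2[OF continuous_on_product_then_coordinatewise[OF gc] fmap_cont_simplex[OF \<sigma>] fN])
      then have c2: "continuous_on ({0..1::real} \<times> closed_simplex ?K \<sigma>) (\<lambda>z. g (fmap (snd z)) v)"
        by (rule continuous_on_compose2[OF _ continuous_on_snd]) auto
      show "continuous_on ({0..1::real} \<times> closed_simplex ?K \<sigma>) (\<lambda>z. (1 - fst z) * aprime s (snd z) v + fst z * g (fmap (snd z)) v)"
        by (intro continuous_intros c1 c2)
    qed
    fix z :: "real \<times> ((real \<times> real) \<Rightarrow> real)" assume z: "z \<in> {0..1::real} \<times> closed_simplex ?K \<sigma>"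
    then have fzN: "fmap (snd z) \<in> ?N" using fN by auto
    obtain T' F' where T': "open T'" "fmap (snd z) \<in> T'" "finite F'" "\<forall>y'\<in>T' \<inter> ?N. supp_coords (g y') \<subseteq> F'"
      using g4[OF fzN] by blast
    show "\<exists>T F. openin (top_of_set ({0..1::real} \<times> closed_simplex ?K \<sigma>)) T \<and> z \<in> T \<and> finite F \<and> (\<forall>z'\<in>T. supp_coords (h z') \<subseteq> F)"
    proof (intro exI conjI ballI)
      show "openin (top_of_set ({0..1::real} \<times> closed_simplex ?K \<sigma>)) (({0..1::real} \<times> closed_simplex ?K \<sigma>) \<inter> (fmap \<circ> snd) -` T')"
        by (rule continuous_openin_preimage_gen[OF fsc T'(1)])
      show "z \<in> ({0..1::real} \<times> closed_simplex ?K \<sigma>) \<inter> (fmap \<circ> snd) -` T'" using z T'(2) by simp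
      show "finite (\<sigma> \<union> F')" using closed_simplex_VR_finite[OF \<sigma>] T'(3) by simp
      fix z' assume z': "z' \<in> ({0..1::real} \<times> closed_simplex ?K \<sigma>) \<inter> (fmap \<circ> snd) -` T'"
      then have s1: "supp_coords (snd z') \<subseteq> \<sigma>" unfolding closed_simplex_def by auto
      have "fmap (snd z') \<in> T' \<inter> ?N" using z' fN by auto
      then have s2: "supp_coords (g (fmap (snd z'))) \<subseteq> F'" using T'(4) by blast
      show "supp_coords (h z') \<subseteq> \<sigma> \<union> F'"
        unfolding h_def using comb_supp[of "1 - fst z'" "aprime s (snd z')" "fst z'" "g (fmap (snd z'))"]
          supp_aprime[of s "snd z'"] s1 s2 by blast
    qed
  next
    fix t \<alpha> assume t: "t \<in> {0..1::real}" and a: "\<alpha> \<in> geom_real ?K"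
    let ?q = "fmap \<alpha>"
    have q: "?q \<in> ?N" using fmap_in_nbhd[OF a] .
    define T where "T = {v \<in> supp_coords \<alpha>. l1_dist v ?q < s} \<union> supp_coords (g ?q)"
    have finT: "finite T" unfolding T_def using geom_real_finite[OF a] geom_real_finite[OF gg[OF q]] by simp
    have supT: "supp_coords (h (t, \<alpha>)) \<subseteq> T"
      unfolding h_def T_def using comb_supp[of "1 - t" "aprime s \<alpha>" t "g ?q"] supp_aprime[of s \<alpha>] by auto
    have sA: "sum (aprime s \<alpha>) T = 1"
      by (rule geom_real_sum_superset[OF aprime_geom[OF a] finT]) (use supp_aprime[of s \<alpha>] in \<open>auto simp: T_def\<close>)
    have sG: "sum (g ?q) T = 1"
      by (rule geom_real_sum_superset[OF gg[OF q] finT]) (auto simp: T_def)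
    have TVR: "T \<in> ?K"
    proof (rule VR_close[OF finT, of X ?q s])
      have "supp_coords (g ?q) \<noteq> {}" using gg[OF q] unfolding geom_real_def by auto
      then show "T \<noteq> {}" unfolding T_def by blast
      have "supp_coords \<alpha> \<subseteq> X" using geom_real_supp_in[OF a] unfolding VR_def by simp
      then show "T \<subseteq> X" unfolding T_def using g3[OF q] by blast
      show "\<forall>x\<in>T. l1_dist x ?q < s" unfolding T_def using g3[OF q] by blast
    qed
    show "h (t, \<alpha>) \<in> geom_real ?K"
    proof (rule mem_geom_VR[OF _ finT supT _ TVR])
      show "\<And>v. 0 \<le> h (t, \<alpha>) v" unfolding h_def
        using t aprime_nonneg[OF a] geom_real_nonneg[OF gg[OF q]] by simp
      show "sum (h (t, \<alpha>)) T = 1"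
        unfolding h_def using sum_comb[of "1 - t" "aprime s \<alpha>" t "g ?q" T] sA sG by simp
    qed
  qed
  show ?thesis
    unfolding homotopic_with_def
  proof (intro exI conjI allI ballI)
    show "continuous_map (prod_topology (top_of_set {0..1}) (realization ?K)) (realization ?K) h" by (rule hc)
    show "\<And>\<alpha>. h (0, \<alpha>) = aprime s \<alpha>" unfolding h_def by simp
    show "\<And>\<alpha>. h (1, \<alpha>) = (g \<circ> fmap) \<alpha>" unfolding h_def by (simp add: o_def)
  qed simp
qed

lemma main_he:
  assumes spos: "s > 0"
  shows "realization (VR X (2 * s)) homotopy_equivalent_space top_of_set (l1_nbhd X s)"
proof -
  let ?K = "VR X (2 * s)"
  let ?N = "l1_nbhd X s"
  obtain g where gc: "continuous_on ?N g"
    and gg: "\<And>y. y \<in> ?N \<Longrightarrow> g y \<in> geom_real ?K"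
    and g3: "\<And>y x. y \<in> ?N \<Longrightarrow> x \<in> supp_coords (g y) \<Longrightarrow> x \<in> X \<and> l1_dist x y < s"
    and g4: "\<And>y. y \<in> ?N \<Longrightarrow> \<exists>T F. open T \<and> y \<in> T \<and> finite F \<and> (\<forall>y'\<in>T \<inter> ?N. supp_coords (g y') \<subseteq> F)"
    using g_exists by blast
  have gcont: "continuous_map (top_of_set ?N) (realization ?K) g"
  proof (rule cont_into_realization)
    show "continuous_map (top_of_set ?N) euclidean g" using gc by simp
    fix y assume y: "y \<in> topspace (top_of_set ?N)"
    then show "g y \<in> geom_real ?K" using gg by simp
    have yN: "y \<in> ?N" using y by simp
    obtain T F where TF: "open T" "y \<in> T" "finite F" "\<forall>y'\<in>T \<inter> ?N. supp_coords (g y') \<subseteq> F"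
      using g4[OF yN] by blast
    show "\<exists>T F. openin (top_of_set ?N) T \<and> y \<in> T \<and> finite F \<and> (\<forall>y'\<in>T. supp_coords (g y') \<subseteq> F)"
    proof (intro exI conjI)
      show "openin (top_of_set ?N) (?N \<inter> T)" using TF(1) by blast
      show "y \<in> ?N \<inter> T" using y TF(2) by simp
      show "finite F" by (rule TF(3))
      show "\<forall>y'\<in>?N \<inter> T. supp_coords (g y') \<subseteq> F" using TF(4) by blast
    qed
  qed
  have fcont: "continuous_map (realization ?K) (top_of_set ?N) fmap" using fmap_cont[OF spos] .
  have "continuous_map (top_of_set ?N) (top_of_set ?N) (fmap \<circ> g)"
    by (rule continuous_map_compose[OF gcont fcont])
  then have fgc: "continuous_on ?N (fmap \<circ> g)"
    by (simp add: continuous_map_in_subtopology)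
  have h1: "homotopic_with (\<lambda>x. True) (top_of_set ?N) (top_of_set ?N) (fmap \<circ> g) id"
    by (rule homotopy_N[OF gc gg g3 fgc])
  have h2: "homotopic_with (\<lambda>x. True) (realization ?K) (realization ?K) (g \<circ> fmap) id"
  proof -
    have "homotopic_with (\<lambda>x. True) (realization ?K) (realization ?K) id (g \<circ> fmap)"
      by (rule homotopic_with_trans[OF homotopy_K1 homotopy_K2[OF gc gg g3 g4]])
    then show ?thesis by (simp add: homotopic_with_sym)
  qed
  show ?thesis
    unfolding homotopy_equivalent_space_def using fcont gcont h1 h2 by blast
qed


theorem corollary2p3:
  shows "(\<forall>(X :: (real \<times> real) set) (r :: real). r > 0 \<longrightarrow>
            realization (VR X r) homotopy_equivalent_space top_of_set (l1_nbhd X (r / 2)))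
       \<and> (\<forall>(X :: (real \<times> real) set) (\<epsilon> :: real). \<epsilon> > 0 \<and> l1_dense X \<epsilon> \<longrightarrow>
            (\<forall>r. r > 2 * \<epsilon> \<longrightarrow> contractible_space (realization (VR X r))))"
proof (intro conjI allI impI)
  fix X :: "(real \<times> real) set" and r :: real
  assume "r > 0"
  then have "realization (VR X (2 * (r / 2))) homotopy_equivalent_space top_of_set (l1_nbhd X (r / 2))"
    by (intro main_he) simp
  then show "realization (VR X r) homotopy_equivalent_space top_of_set (l1_nbhd X (r / 2))" by simp
next
  fix X :: "(real \<times> real) set" and \<epsilon> r :: real
  assume a: "\<epsilon> > 0 \<and> l1_dense X \<epsilon>" and r: "r > 2 * \<epsilon>"
  then have rpos: "r / 2 > 0" by simp
  have he: "realization (VR X (2 * (r / 2))) homotopy_equivalent_space top_of_set (l1_nbhd X (r / 2))"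
    by (rule main_he[OF rpos])
  have "l1_nbhd X (r / 2) = UNIV"
  proof (intro set_eqI iffI)
    fix y :: "real \<times> real"
    obtain x where x: "x \<in> X" "l1_dist y x < \<epsilon>" using a unfolding l1_dense_def by blast
    then have "l1_dist x y < r / 2" using r l1_dist_sym[of x y] by simp
    then show "y \<in> l1_nbhd X (r / 2)" using x(1) unfolding l1_nbhd_def by blast
  qed simp
  then have "contractible (l1_nbhd X (r / 2))"
    by (simp add: convex_imp_contractible)
  then have "contractible_space (top_of_set (l1_nbhd X (r / 2)))"
    by (simp only: contractible_space_top_of_set)
  then show "contractible_space (realization (VR X r))"
    using homotopy_equivalent_space_contractibility[OF he] by simp
qed

end
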